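(* All zeros of $c$, $s$, $d$ lie on the three rays $\{-\zeta_2^{j}x: x\ge 0\}$, $j\in\{-1,0,1\}$ (the bisectors of the sectors $S_p=\{z:\frac{2\pi}{3}(p-1)<\arg z<\frac{2\pi p}{3}\}$, $p=1,2,3$). More precisely, the zero sets of $c,s,d$ are respectively $\{-\zeta_2^{j}x_c(k)\}$, $\{-\zeta_2^{j}x_s(k)\}$, $\{-\zeta_2^{j}x_d(k)\}$ ($j\in\{-1,0,1\}$, $k\ge1$), where $0<x_c(1)<x_c(2)<\dots$ are the positive roots of $\cos\frac{\sqrt3}{2}x=-\frac12e^{-\frac32x}$, $0=x_s(1)<x_s(2)<\dots$ are the nonnegative roots of $\sin\left(\frac{\sqrt3}{2}x+\frac\pi6\right)=\frac12e^{-\frac32x}$, and $0=x_d(1)<x_d(2)<\dots$ are the nonnegative roots of $\sin\left(\frac{\sqrt3}{2}x-\frac\pi6\right)=-\frac12e^{-\frac32x}$; all these roots of the respective real equations are simple. Moreover, the sequence $(x_d(k))$ interlaces with $(x_s(k))$, and $(x_s(k))$ interlaces with $(x_c(k))$.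
   Context: Let $\zeta_1=1$, $\zeta_2=-\frac12+\frac{\sqrt3}{2}i$, $\zeta_3=-\frac12-\frac{\sqrt3}{2}i$ be the cube roots of unity. For $z\in\mathbb C$ define $c(z)=\frac13\sum_{k=1}^3 e^{z\zeta_k}$, $s(z)=\frac13\sum_{k=1}^3\zeta_k^{-1}e^{z\zeta_k}$, $d(z)=\frac13\sum_{k=1}^3\zeta_k^{-2}e^{z\zeta_k}$. *)

theory Defs
  imports "HOL-Analysis.Analysis"
begin

definition zeta1 :: complex where "zeta1 = 1"
definition zeta2 :: complex where "zeta2 = - 1/2 + (sqrt 3 / 2) * \<i>"
definition zeta3 :: complex where "zeta3 = - 1/2 - (sqrt 3 / 2) * \<i>"

definition zetas :: "nat \<Rightarrow> complex" where
  "zetas k = (if k = 1 then zeta1 else if k = 2 then zeta2 else zeta3)"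

definition cfun :: "complex \<Rightarrow> complex" where
  "cfun z = (1/3) * (\<Sum>k\<in>{1..3::nat}. exp (z * zetas k))"
definition sfun :: "complex \<Rightarrow> complex" where
  "sfun z = (1/3) * (\<Sum>k\<in>{1..3::nat}. inverse (zetas k) * exp (z * zetas k))"
definition dfun :: "complex \<Rightarrow> complex" where
  "dfun z = (1/3) * (\<Sum>k\<in>{1..3::nat}. inverse (zetas k ^ 2) * exp (z * zetas k))"

definition Fc :: "real \<Rightarrow> real" where
  "Fc x = cos (sqrt 3 / 2 * x) - (- (1/2) * exp (- (3/2) * x))"
definition Fs :: "real \<Rightarrow> real" where
  "Fs x = sin (sqrt 3 / 2 * x + pi / 6) - (1/2) * exp (- (3/2) * x)"
definition Fd :: "real \<Rightarrow> real" where
  "Fd x = sin (sqrt 3 / 2 * x - pi / 6) - (- (1/2) * exp (- (3/2) * x))"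

end

theory Submission
  imports Defs
begin


definition R :: "real \<Rightarrow> real \<Rightarrow> real" where
  "R g x = cos (sqrt 3 / 2 * x - g) + 1/2 * exp (- (3/2) * x)"
definition R' :: "real \<Rightarrow> real \<Rightarrow> real" where
  "R' g x = - (sqrt 3 / 2) * sin (sqrt 3 / 2 * x - g) - 3/4 * exp (- (3/2) * x)"

lemma R_deriv: "(R g has_real_derivative R' g x) (at x)"
  unfolding R_def R'_def
  by (auto intro!: derivative_eq_intros simp: algebra_simps)

lemma R_cont: "continuous_on S (R g)"
  unfolding R_def by (intro continuous_intros)

lemma cos_shift: "cos (pi * of_int k + t) = (if even k then 1 else -1) * cos t"
  by (simp add: cos_add)
lemma sin_shift: "sin (pi * of_int k + t) = (if even k then 1 else -1) * sin t"
  by (simp add: sin_add)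

lemma cos_sq_le:
  assumes "pi/3 \<le> t" "t \<le> 2*pi/3"
  shows "(cos (pi * of_int k + t))^2 \<le> 1/4"
proof -
  have "cos t \<le> cos (pi/3)" using assms by (intro cos_monotone_0_pi_le) auto
  moreover have "cos (2*pi/3) \<le> cos t" using assms by (intro cos_monotone_0_pi_le) auto
  ultimately have "cos t \<le> 1/2" "-1/2 \<le> cos t" by (auto simp: cos_60 cos_120)
  then have "(cos t - 1/2) * (cos t + 1/2) \<le> 0" by (intro mult_nonpos_nonneg) auto
  then have "(cos t)^2 \<le> 1/4" by (simp add: power2_eq_square algebra_simps)
  then show ?thesis by (simp add: cos_shift power_mult_distrib)
qed

lemma cos_small_loc:
  assumes "\<bar>cos w\<bar> < 1/2"
  shows "\<exists>k::int. pi * k + pi/3 < w \<and> w < pi * k + 2*pi/3"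
proof -
  define k where "k = \<lfloor>w / pi\<rfloor>"
  define t where "t = w - pi * k"
  have "k \<le> w/pi" "w/pi < k + 1" unfolding k_def by linarith+
  then have t0: "0 \<le> t" "t < pi" unfolding t_def using pi_gt_zero
    by (auto simp: field_simps)
  have w: "w = pi * k + t" unfolding t_def by simp
  have ct: "\<bar>cos t\<bar> < 1/2" using assms by (simp add: w cos_shift abs_mult split: if_splits)
  have "pi/3 < t"
  proof (rule ccontr)
    assume "\<not> pi/3 < t"
    then have "cos (pi/3) \<le> cos t" using t0 by (intro cos_monotone_0_pi_le) auto
    then show False using ct by (simp add: cos_60)
  qed
  moreover have "t < 2*pi/3"
  proof (rule ccontr)
    assume "\<not> t < 2*pi/3"
    then have "cos t \<le> cos (2*pi/3)" using t0 by (intro cos_monotone_0_pi_le) auto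
    then show False using ct by (simp add: cos_120)
  qed
  ultimately show ?thesis using w by (intro exI[of _ k]) auto
qed

lemma R'_ne:
  assumes "0 < x" "(cos (sqrt 3 / 2 * x - g))^2 \<le> 1/4"
  shows "R' g x \<noteq> 0"
proof
  assume h: "R' g x = 0"
  define w where "w = sqrt 3 / 2 * x - g"
  define e where "e = exp (- (3/2) * x)"
  have e: "0 < e" "e < 1" using assms(1) unfolding e_def by auto
  have "sqrt 3 * sin w = - (3/2) * e" using h unfolding R'_def w_def e_def by (simp add: field_simps)
  then have "(sqrt 3 * sin w)^2 = (3/2 * e)^2" by (simp add: power2_eq_square)
  then have "3 * (sin w)^2 = 9/4 * e^2" by (simp add: power_mult_distrib power2_eq_square field_simps)
  moreover have "e^2 < 1" using e by (simp add: power_less_one_iff)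
  moreover have "(sin w)^2 + (cos w)^2 = 1" by simp
  ultimately show False using assms(2) unfolding w_def by linarith
qed

lemma R_root_simple:
  assumes "0 < x" "R g x = 0"
  shows "R' g x \<noteq> 0"
proof
  assume h: "R' g x = 0"
  define w where "w = sqrt 3 / 2 * x - g"
  define e where "e = exp (- (3/2) * x)"
  have e: "0 < e" "e < 1" using assms(1) unfolding e_def by auto
  have "sqrt 3 * sin w = - (3/2) * e" using h unfolding R'_def w_def e_def by (simp add: field_simps)
  then have "(sqrt 3 * sin w)^2 = (3/2 * e)^2" by (simp add: power2_eq_square)
  then have "3 * (sin w)^2 = 9/4 * e^2" by (simp add: power_mult_distrib power2_eq_square field_simps)
  moreover have "cos w = - 1/2 * e" using assms(2) unfolding R_def w_def e_def by simp
  then have "(cos w)^2 = 1/4 * e^2" by (simp add: power2_eq_square)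
  moreover have "e^2 < 1" using e by (simp add: power_less_one_iff)
  moreover have "(sin w)^2 + (cos w)^2 = 1" by simp
  ultimately show False by linarith
qed

lemma R_cos_of_root:
  assumes "0 < x" "R g x = 0"
  shows "\<bar>cos (sqrt 3 / 2 * x - g)\<bar> < 1/2"
proof -
  have "cos (sqrt 3 / 2 * x - g) = - 1/2 * exp (- (3/2) * x)" using assms(2) unfolding R_def by simp
  moreover have "exp (- (3/2) * x) < 1" "0 < exp (- (3/2) * x)" using assms(1) by auto
  ultimately show ?thesis by simp
qed

definition ia :: "real \<Rightarrow> int \<Rightarrow> real" where "ia g k = 2 / sqrt 3 * (pi * k + pi/3 + g)"
definition ib :: "real \<Rightarrow> int \<Rightarrow> real" where "ib g k = 2 / sqrt 3 * (pi * k + 2*pi/3 + g)"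

lemma theta_ia: "sqrt 3 / 2 * ia g k - g = pi * k + pi/3" unfolding ia_def by simp (simp add: field_simps)
lemma theta_ib: "sqrt 3 / 2 * ib g k - g = pi * k + 2*pi/3" unfolding ib_def by simp (simp add: field_simps)

lemma in_I_iff: "(ia g k \<le> x \<and> x \<le> ib g k) \<longleftrightarrow>
   (pi * k + pi/3 \<le> sqrt 3 / 2 * x - g \<and> sqrt 3 / 2 * x - g \<le> pi * k + 2*pi/3)"
  "(ia g k < x \<and> x < ib g k) \<longleftrightarrow>
   (pi * k + pi/3 < sqrt 3 / 2 * x - g \<and> sqrt 3 / 2 * x - g < pi * k + 2*pi/3)"
  unfolding ia_def ib_def by (auto simp: field_simps)

lemma R'_ne_I:
  assumes "0 < x" "ia g k \<le> x" "x \<le> ib g k"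
  shows "R' g x \<noteq> 0"
proof -
  define t where "t = sqrt 3 / 2 * x - g - pi * k"
  have t: "pi/3 \<le> t" "t \<le> 2*pi/3" using assms(2,3) in_I_iff(1)[of g k x] unfolding t_def by auto
  have "(cos (pi * k + t))^2 \<le> 1/4" by (rule cos_sq_le[OF t])
  then show ?thesis using assms(1) by (intro R'_ne) (simp_all add: t_def)
qed

lemma no_two_roots:
  assumes "x < y" "R g x = 0" "R g y = 0" "\<And>z. x < z \<Longrightarrow> z < y \<Longrightarrow> R' g z \<noteq> 0"
  shows False
proof -
  obtain z where z: "x < z" "z < y" "(\<lambda>v. R' g z * v) = (\<lambda>v. 0)"
    using Rolle_deriv[of x y "R g" "\<lambda>z v. R' g z * v"] assms(1-3) R_cont R_deriv
    by (auto simp: has_field_derivative_def)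
  from fun_cong[OF z(3), of 1] have "R' g z = 0" by simp
  with assms(4) z show False by auto
qed

lemma R_endpoints:
  "R g (ia g k) = (if even k then 1 else -1) / 2 + 1/2 * exp (- (3/2) * ia g k)"
  "R g (ib g k) = - (if even k then 1 else -1) / 2 + 1/2 * exp (- (3/2) * ib g k)"
  unfolding R_def theta_ia theta_ib
  by (simp_all add: cos_shift cos_60 cos_120 del: cos_npi_int)

lemma ia_ib: "ia g k < ib g k" unfolding ia_def ib_def by (simp add: field_simps)

lemma root_exists:
  assumes "0 < ia g k"
  shows "\<exists>x. ia g k < x \<and> x < ib g k \<and> R g x = 0"
proof -
  let ?a = "ia g k" and ?b = "ib g k"
  have ea: "exp (- (3/2) * ?a) < 1" "exp (- (3/2) * ?b) < 1" using assms ia_ib[of g k] by auto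
  have ep: "0 < exp (- (3/2) * ?a)" "0 < exp (- (3/2) * ?b)" by auto
  have "\<exists>x. ?a \<le> x \<and> x \<le> ?b \<and> R g x = 0"
  proof (cases "even k")
    case True
    then have "R g ?b \<le> 0" "0 \<le> R g ?a" unfolding R_endpoints if_P[OF True] using ea ep by linarith+
    then show ?thesis using IVT2'[of "R g" ?b 0 ?a, OF _ _ less_imp_le[OF ia_ib] R_cont] by blast
  next
    case False
    then have "R g ?a \<le> 0" "0 \<le> R g ?b" unfolding R_endpoints if_not_P[OF False] using ea ep by linarith+
    then show ?thesis using IVT'[of "R g" ?a 0 ?b, OF _ _ less_imp_le[OF ia_ib] R_cont] by blast
  qed
  then obtain x where x: "?a \<le> x" "x \<le> ?b" "R g x = 0" by blast
  have "R g ?a \<noteq> 0 \<and> R g ?b \<noteq> 0"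
  proof (cases "even k")
    case True
    then show ?thesis unfolding R_endpoints if_P[OF True] using ea ep by linarith
  next
    case False
    then show ?thesis unfolding R_endpoints if_not_P[OF False] using ea ep by linarith
  qed
  with x have "?a < x" "x < ?b" by (metis order_le_less)+
  with x show ?thesis by blast
qed

lemma root_unique:
  assumes "0 < ia g k" "ia g k \<le> x" "x \<le> ib g k" "R g x = 0"
      "ia g k \<le> y" "y \<le> ib g k" "R g y = 0"
  shows "x = y"
proof (rule ccontr)
  assume "x \<noteq> y"
  then consider "x < y" | "y < x" by linarith
  then show False
  proof cases
    case 1
    show False
    proof (rule no_two_roots[OF 1 assms(4,7)])
      fix z assume "x < z" "z < y" then show "R' g z \<noteq> 0" using assms(1,2,6) by (intro R'_ne_I[of z g k]) linarith+
    qed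
  next
    case 2
    show False
    proof (rule no_two_roots[OF 2 assms(7,4)])
      fix z assume "y < z" "z < x" then show "R' g z \<noteq> 0" using assms(1,5,3) by (intro R'_ne_I[of z g k]) linarith+
    qed
  qed
qed

definition rt :: "real \<Rightarrow> int \<Rightarrow> real" where
  "rt g k = (THE x. ia g k \<le> x \<and> x \<le> ib g k \<and> R g x = 0)"

lemma rt_props:
  assumes "0 < ia g k"
  shows "ia g k < rt g k" "rt g k < ib g k" "R g (rt g k) = 0"
proof -
  obtain x where x: "ia g k < x" "x < ib g k" "R g x = 0" using root_exists[OF assms] by blast
  have "rt g k = x" unfolding rt_def
  proof (rule the_equality)
    show "ia g k \<le> x \<and> x \<le> ib g k \<and> R g x = 0" using x by simp
    fix y assume "ia g k \<le> y \<and> y \<le> ib g k \<and> R g y = 0"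
    then show "y = x" using root_unique[OF assms, of y x] x by simp
  qed
  with x show "ia g k < rt g k" "rt g k < ib g k" "R g (rt g k) = 0" by auto
qed

lemma rt_eq:
  assumes "0 < ia g k" "ia g k \<le> x" "x \<le> ib g k" "R g x = 0"
  shows "rt g k = x"
proof -
  have p: "ia g k < rt g k" "rt g k < ib g k" "R g (rt g k) = 0" using rt_props[OF assms(1)] by auto
  show ?thesis using root_unique[OF assms(1) _ _ p(3) assms(2-4)] p(1,2) by simp
qed

lemma root_in_some:
  assumes "0 < x" "R g x = 0"
  shows "\<exists>k. ia g k < x \<and> x < ib g k"
proof -
  obtain k :: int where "pi * k + pi/3 < sqrt 3 / 2 * x - g" "sqrt 3 / 2 * x - g < pi * k + 2*pi/3"
    using cos_small_loc[OF R_cos_of_root[OF assms]] by blast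
  then show ?thesis using in_I_iff(2)[of g k x] by blast
qed




lemma z23: "zeta2 * zeta3 = 1" "zeta3 * zeta2 = 1" "zeta2 * zeta2 = zeta3" "zeta3 * zeta3 = zeta2"
  unfolding zeta2_def zeta3_def by (simp_all add: complex_eq_iff algebra_simps)

lemma zinv: "inverse zeta2 = zeta3" "inverse zeta3 = zeta2"
  using z23 by (simp_all add: inverse_unique)

lemma zne: "zeta2 \<noteq> 0" "zeta3 \<noteq> 0" using z23 by auto

lemma sum3: fixes f :: "nat \<Rightarrow> complex" shows "(\<Sum>k\<in>{1..3::nat}. f k) = f 1 + f 2 + f 3"
proof -
  have "{1..3::nat} = {1,2,3}" by auto
  then show ?thesis by (simp add: add.assoc)
qed

lemma cfun_eq: "cfun w = (exp w + exp (w * zeta2) + exp (w * zeta3)) / 3"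
  unfolding cfun_def sum3 zetas_def zeta1_def by simp
lemma sfun_eq: "sfun w = (exp w + zeta3 * exp (w * zeta2) + zeta2 * exp (w * zeta3)) / 3"
  unfolding sfun_def sum3 zetas_def zeta1_def by (simp add: zinv)
lemma dfun_eq: "dfun w = (exp w + zeta2 * exp (w * zeta2) + zeta3 * exp (w * zeta3)) / 3"
proof -
  have "inverse (zeta2^2) = zeta2" "inverse (zeta3^2) = zeta3"
    by (simp_all add: power2_eq_square z23 zinv)
  then show ?thesis unfolding dfun_def sum3 zetas_def zeta1_def by simp
qed

lemma rot2: "zeta2 * z * zeta2 = zeta3 * z" "zeta2 * z * zeta3 = z"
  "zeta3 * z * zeta2 = z" "zeta3 * z * zeta3 = zeta2 * z"
  by (simp_all add: mult.commute mult.left_commute z23 flip: mult.assoc)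

lemma cfun_rot: "cfun (zeta2 * z) = cfun z" "cfun (zeta3 * z) = cfun z"
  unfolding cfun_eq rot2 by (simp_all add: mult.commute algebra_simps)
lemma sfun_rot: "sfun (zeta2 * z) = zeta2 * sfun z" "sfun (zeta3 * z) = zeta3 * sfun z"
  unfolding sfun_eq rot2 by (simp_all add: mult.commute algebra_simps z23 flip: mult.assoc)
lemma dfun_rot: "dfun (zeta2 * z) = zeta3 * dfun z" "dfun (zeta3 * z) = zeta2 * dfun z"
  unfolding dfun_eq rot2 by (simp_all add: mult.commute algebra_simps z23 flip: mult.assoc)

definition Hc :: "real \<Rightarrow> complex \<Rightarrow> complex" where
  "Hc g z = exp (3/2 * z) + 2 * cos (complex_of_real (sqrt 3 / 2) * z + complex_of_real g)"

lemma Hc_real: "Hc g (- complex_of_real x) = complex_of_real (2 * R g x)"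
proof -
  have "complex_of_real (sqrt 3 / 2) * (- complex_of_real x) + complex_of_real g
      = complex_of_real (- (sqrt 3 / 2 * x - g))" by simp
  moreover have "3/2 * (- complex_of_real x) = complex_of_real (- (3/2) * x)" by simp
  ultimately show ?thesis unfolding Hc_def R_def
    by (simp only: cos_of_real exp_of_real cos_minus) (simp add: algebra_simps)
qed

lemma cos_eq2: "2 * cos (complex_of_real (sqrt 3 / 2) * z + complex_of_real g)
   = exp (\<i> * complex_of_real (sqrt 3 / 2) * z) * exp (\<i> * complex_of_real g)
   + exp (- (\<i> * complex_of_real (sqrt 3 / 2) * z)) * exp (- (\<i> * complex_of_real g))"
  unfolding cos_exp_eq by (simp add: exp_add[symmetric] algebra_simps)

lemma e_half: "exp (z/2) * exp z = exp (3/2 * z)"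
  "exp (z/2) * exp (z * zeta2) = exp (\<i> * complex_of_real (sqrt 3 / 2) * z)"
  "exp (z/2) * exp (z * zeta3) = exp (- (\<i> * complex_of_real (sqrt 3 / 2) * z))"
  unfolding exp_add[symmetric] zeta2_def zeta3_def by (simp_all add: algebra_simps)

lemma eig: "exp (\<i> * complex_of_real (2*pi/3)) = zeta2" "exp (- (\<i> * complex_of_real (2*pi/3))) = zeta3"
proof -
  have c: "cos (2*pi/3) = -1/2" "sin (2*pi/3) = sqrt 3/2"
    using cos_120 sin_120' by (simp_all add: mult.commute)
  show "exp (\<i> * complex_of_real (2*pi/3)) = zeta2"
    unfolding cis_conv_exp[symmetric] zeta2_def using c by (simp add: complex_eq_iff)
  have "exp (- (\<i> * complex_of_real (2*pi/3))) = cis (- (2*pi/3))"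
    unfolding cis_conv_exp by simp
  then show "exp (- (\<i> * complex_of_real (2*pi/3))) = zeta3"
    unfolding zeta3_def using c by (simp add: complex_eq_iff)
qed

lemma three: "3 * w * ((a + b + c) / 3) = w * a + w * b + (w * c::complex)"
  by (simp add: field_simps)

lemma eig': "exp (\<i> * complex_of_real (-(2*pi/3))) = zeta3" "exp (- (\<i> * complex_of_real (-(2*pi/3)))) = zeta2"
  using eig by (simp_all only: of_real_minus mult_minus_right minus_minus)

lemma cfun_H: "3 * exp (z/2) * cfun z = Hc 0 z"
  unfolding cfun_eq three e_half Hc_def cos_eq2 by simp

lemma sfun_H: "3 * exp (z/2) * sfun z = Hc (-(2*pi/3)) z"
proof -
  have "3 * exp (z/2) * sfun z = exp (z/2) * exp z + zeta3 * (exp (z/2) * exp (z * zeta2))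
     + zeta2 * (exp (z/2) * exp (z * zeta3))"
    unfolding sfun_eq three by (simp add: mult.left_commute)
  also have "\<dots> = Hc (-(2*pi/3)) z"
    unfolding e_half Hc_def cos_eq2 eig' by (simp add: mult.commute)
  finally show ?thesis .
qed

lemma dfun_H: "3 * exp (z/2) * dfun z = Hc (2*pi/3) z"
proof -
  have "3 * exp (z/2) * dfun z = exp (z/2) * exp z + zeta2 * (exp (z/2) * exp (z * zeta2))
     + zeta3 * (exp (z/2) * exp (z * zeta3))"
    unfolding dfun_eq three by (simp add: mult.left_commute)
  also have "\<dots> = Hc (2*pi/3) z"
    unfolding e_half Hc_def cos_eq2 eig by (simp add: mult.commute)
  finally show ?thesis .
qed

lemma Hc_Im:
  assumes "Re z < 0" "Hc g z = 0"
  shows "Im z = 0"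
proof (rule ccontr)
  assume Y0: "Im z \<noteq> 0"
  define X where "X = Re z"
  define Y where "Y = Im z"
  define p where "p = sqrt 3 / 2 * X + g"
  define q where "q = sqrt 3 / 2 * Y"
  define E where "E = exp (3/2 * X)"
  define C where "C = (exp q + exp (- q)) / 2"
  define S where "S = (exp q - exp (- q)) / 2"
  have E: "0 < E" "E < 1" using assms(1) unfolding E_def X_def by auto
  have q0: "q \<noteq> 0" using Y0 unfolding q_def Y_def by simp
  have Y3: "3/2 * Y = sqrt 3 * q" unfolding q_def
    by (simp add: algebra_simps)
  let ?u = "complex_of_real (sqrt 3 / 2) * z + complex_of_real g"
  have ReU: "Re ?u = p" and ImU: "Im ?u = q" unfolding p_def q_def X_def Y_def by simp_all
  have r32: "Re (3/2 * z) = 3/2 * X" "Im (3/2 * z) = sqrt 3 * q" using Y3 unfolding X_def Y_def by simp_all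
  have e1: "Re (exp (3/2*z)) = E * cos (sqrt 3 * q)" "Im (exp (3/2*z)) = E * sin (sqrt 3 * q)"
    unfolding Re_exp Im_exp r32 E_def by simp_all
  have two: "\<And>w. Re (2 * w) = 2 * Re w" "\<And>w. Im (2 * w) = 2 * Im w" by simp_all
  have c1: "Re (cos ?u) = cos p * C" "Im (cos ?u) = - (sin p * S)"
    unfolding Re_cos Im_cos ReU ImU C_def S_def by (simp_all add: field_simps)
  have "Re (Hc g z) = E * cos (sqrt 3 * q) + 2 * (cos p * C)"
    unfolding Hc_def by (simp only: plus_complex.sel two e1 c1)
  then have re: "E * cos (sqrt 3 * q) + 2 * (cos p * C) = 0" using assms(2) by simp
  have "Im (Hc g z) = E * sin (sqrt 3 * q) - 2 * (sin p * S)"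
    unfolding Hc_def by (simp only: plus_complex.sel two e1 c1)
  then have im: "E * sin (sqrt 3 * q) = 2 * (sin p * S)" using assms(2) by simp
  have ea: "1 + q \<le> exp q" by (rule exp_ge_add_one_self)
  have eb: "1 + (- q) \<le> exp (- q)" by (rule exp_ge_add_one_self)
  have "2 \<le> exp q + exp (- q)" using ea eb by linarith
  then have C1: "1 \<le> C" unfolding C_def by simp
  have "\<bar>2 * (cos p * C)\<bar> = \<bar>E * cos (sqrt 3 * q)\<bar>" using re by linarith
  also have "\<dots> \<le> E" using E by (simp add: abs_mult)
  finally have "2 * \<bar>cos p\<bar> * C < 1" using E C1 by (simp add: abs_mult)
  moreover have "2 * \<bar>cos p\<bar> \<le> 2 * \<bar>cos p\<bar> * C" using C1 by (simp add: mult_le_cancel_left1)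
  ultimately have cp: "\<bar>cos p\<bar> < 1/2" by linarith
  have "\<bar>cos p\<bar>^2 < (1/2)^2" using cp by (intro power_strict_mono) auto
  then have "(cos p)^2 < 1/4" by (simp add: power2_abs power_divide)
  moreover have "(sin p)^2 + (cos p)^2 = 1" by simp
  ultimately have sp: "3/4 < (sin p)^2" by linarith
  have "\<bar>q\<bar> \<le> \<bar>S\<bar>" unfolding S_def using real_le_abs_sinh[of q] by (simp add: exp_minus)
  then have "\<bar>q\<bar>^2 \<le> \<bar>S\<bar>^2" by (intro power_mono) auto
  then have Sq: "q^2 \<le> S^2" by (simp add: power2_abs)
  have q2: "0 < q^2" using q0 by simp
  have "\<bar>sin (sqrt 3 * q)\<bar> \<le> \<bar>sqrt 3 * q\<bar>" by (rule abs_sin_x_le_abs_x)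
  then have "\<bar>sin (sqrt 3 * q)\<bar>^2 \<le> \<bar>sqrt 3 * q\<bar>^2" by (intro power_mono) auto
  then have s3: "(sin (sqrt 3 * q))^2 \<le> 3 * q^2" by (simp add: power2_abs power_mult_distrib)
  have E2: "E^2 < 1" using E by (simp add: power_less_one_iff)
  have "(E * sin (sqrt 3 * q))^2 = E^2 * (sin (sqrt 3 * q))^2" by (simp add: power_mult_distrib)
  also have "\<dots> \<le> E^2 * (3 * q^2)" using s3 by (intro mult_left_mono) auto
  also have "\<dots> < 3 * q^2" using E2 q2 by simp
  finally have L: "(E * sin (sqrt 3 * q))^2 < 3 * q^2" .
  have "3 * q^2 = 4 * (3/4) * q^2" by simp
  also have "\<dots> < 4 * (sin p)^2 * q^2" using sp q2 by simp
  also have "\<dots> \<le> 4 * (sin p)^2 * S^2" using Sq by (intro mult_left_mono) auto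
  also have "\<dots> = (2 * (sin p * S))^2" by (simp add: power_mult_distrib)
  finally have "3 * q^2 < (2 * (sin p * S))^2" .
  with L im show False by simp
qed

lemma zpow: "zeta2 powi (-1) = zeta3" "zeta2 powi 0 = 1" "zeta2 powi 1 = zeta2"
  by (simp_all add: power_int_def zinv)

lemma zero_set:
  fixes f :: "complex \<Rightarrow> complex"
  assumes H: "\<And>z. 3 * exp (z/2) * f z = Hc g z"
    and r2: "\<And>z. f (zeta2 * z) = l * f z" and r3: "\<And>z. f (zeta3 * z) = m * f z"
    and l: "l \<noteq> 0" and m: "m \<noteq> 0"
  shows "{z. f z = 0} = {- (zeta2 powi j) * complex_of_real x | j x. j \<in> {-1,0,1} \<and> 0 \<le> x \<and> R g x = 0}"
proof -
  have fH: "f z = 0 \<longleftrightarrow> Hc g z = 0" for z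
    using H[of z] by (metis exp_not_eq_zero mult_eq_0_iff zero_neq_numeral)
  have fR: "f (- complex_of_real x) = 0 \<longleftrightarrow> R g x = 0" for x
    using fH Hc_real by simp
  have neg: "\<exists>x. 0 \<le> x \<and> R g x = 0 \<and> w = - complex_of_real x" if "f w = 0" "Re w < 0" for w
  proof -
    have "Im w = 0" using Hc_Im that fH by blast
    then have w: "w = - complex_of_real (- Re w)" by (simp add: complex_eq_iff)
    then have "R g (- Re w) = 0" using fR that(1) by metis
    then show ?thesis using w that(2) by (intro exI[of _ "- Re w"]) auto
  qed
  have R0: "f 0 = 0 \<Longrightarrow> R g 0 = 0" using fR[of 0] by simp
  have re2: "Re (zeta2 * z) = - Re z / 2 - sqrt 3 / 2 * Im z" for z unfolding zeta2_def by simp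
  have re3: "Re (zeta3 * z) = - Re z / 2 + sqrt 3 / 2 * Im z" for z unfolding zeta3_def by simp
  show ?thesis
  proof (intro set_eqI iffI)
    fix z assume "z \<in> {z. f z = 0}"
    then have fz: "f z = 0" by simp
    show "z \<in> {- (zeta2 powi j) * complex_of_real x | j x. j \<in> {-1,0,1} \<and> 0 \<le> x \<and> R g x = 0}"
    proof (cases "Re z < 0")
      case True
      then obtain x where "0 \<le> x" "R g x = 0" "z = - complex_of_real x" using neg fz by blast
      then show ?thesis by (intro CollectI exI[of _ 0] exI[of _ x]) (simp add: zpow)
    next
      case c1: False
      show ?thesis
      proof (cases "Re (zeta2 * z) < 0")
        case True
        have "f (zeta2 * z) = 0" using r2 fz by simp
        then obtain x where x: "0 \<le> x" "R g x = 0" "zeta2 * z = - complex_of_real x" using neg True by blast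
        have "z = zeta3 * (zeta2 * z)" by (simp add: z23 flip: mult.assoc)
        then have "z = - zeta3 * complex_of_real x" using x(3) by simp
        then show ?thesis using x by (intro CollectI exI[of _ "-1"] exI[of _ x]) (simp add: zpow z23 zinv)
      next
        case c2: False
        show ?thesis
        proof (cases "Re (zeta3 * z) < 0")
          case True
          have "f (zeta3 * z) = 0" using r3 fz by simp
          then obtain x where x: "0 \<le> x" "R g x = 0" "zeta3 * z = - complex_of_real x" using neg True by blast
          have "z = zeta2 * (zeta3 * z)" by (simp add: z23 flip: mult.assoc)
          then have "z = - zeta2 * complex_of_real x" using x(3) by simp
          then show ?thesis using x by (intro CollectI exI[of _ 1] exI[of _ x]) (simp add: zpow)
        next
          case c3: False
          have "Re z = 0" using c1 c2 c3 re2[of z] re3[of z] by linarith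
          moreover have "sqrt 3 / 2 * Im z = 0" using c1 c2 c3 re2[of z] re3[of z] by linarith
          ultimately have "z = 0" by (simp add: complex_eq_iff)
          then show ?thesis using R0 fz by (intro CollectI exI[of _ 0] exI[of _ 0]) (simp add: zpow)
        qed
      qed
    qed
  next
    fix z assume "z \<in> {- (zeta2 powi j) * complex_of_real x | j x. j \<in> {-1,0,1} \<and> 0 \<le> x \<and> R g x = 0}"
    then obtain j x where jx: "j \<in> {-1,0,1}" "R g x = 0" "z = - (zeta2 powi j) * complex_of_real x" by blast
    have f0: "f (- complex_of_real x) = 0" using fR jx(2) by simp
    from jx(1) show "z \<in> {z. f z = 0}"
    proof (elim insertE emptyE)
      assume "j = -1"
      then have "z = zeta3 * (- complex_of_real x)" using jx(3) by (simp add: zpow zinv)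
      then show ?thesis using r3[of "- complex_of_real x"] f0 by simp
    next
      assume "j = 0"
      then have "z = - complex_of_real x" using jx(3) by (simp add: zpow)
      then show ?thesis using f0 by simp
    next
      assume "j = 1"
      then have "z = zeta2 * (- complex_of_real x)" using jx(3) by (simp add: zpow)
      then show ?thesis using r2[of "- complex_of_real x"] f0 by simp
    qed
  qed
qed




lemma Fc_R: "Fc = R 0" unfolding Fc_def R_def by (rule ext) simp

lemma Fs_R: "Fs = (\<lambda>x. - R (-(2*pi/3)) x)"
proof (rule ext)
  fix x
  have "sqrt 3 / 2 * x - - (2 * pi / 3) = (sqrt 3 / 2 * x + pi / 6) + pi/2" by simp
  then have "cos (sqrt 3 / 2 * x - - (2 * pi / 3)) = - sin (sqrt 3 / 2 * x + pi / 6)"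
    by (simp only: cos_add) simp
  then show "Fs x = - R (-(2*pi/3)) x" unfolding Fs_def R_def by simp
qed

lemma Fd_R: "Fd = R (2*pi/3)"
proof (rule ext)
  fix x
  have "sqrt 3 / 2 * x - 2 * pi / 3 = (sqrt 3 / 2 * x - pi / 6) - pi/2" by simp
  then have "cos (sqrt 3 / 2 * x - 2 * pi / 3) = sin (sqrt 3 / 2 * x - pi / 6)"
    by (simp only: cos_diff) simp
  then show "Fd x = R (2*pi/3) x" unfolding Fd_def R_def by simp
qed

lemma deriv_R: "deriv (R g) x = R' g x" using R_deriv by (rule DERIV_imp_deriv)
lemma deriv_mR: "deriv (\<lambda>x. - R g x) x = - R' g x"
  using DERIV_minus[OF R_deriv] by (rule DERIV_imp_deriv)

lemma R0_vals: "R 0 0 = 3/2" "R (-(2*pi/3)) 0 = 0" "R (2*pi/3) 0 = 0"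
  unfolding R_def by (simp_all add: cos_120)

lemma R'_s0: "R' (-(2*pi/3)) 0 \<noteq> 0"
proof -
  have s: "sin (2*pi/3) = sqrt 3 / 2" using sin_120' by (simp add: mult.commute)
  have "R' (-(2*pi/3)) 0 = - (sqrt 3 / 2) * sin (2*pi/3) - 3/4" unfolding R'_def by simp
  also have "\<dots> = - 3/2" unfolding s by simp
  finally have "R' (-(2*pi/3)) 0 = - 3/2" .
  then show ?thesis by simp
qed

lemma ia_pos: "0 < pi * k + pi/3 + g \<Longrightarrow> 0 < ia g k" unfolding ia_def by simp

lemma rt_theta:
  assumes "0 < pi * k + pi/3 + g"
  shows "pi * k + pi/3 + g < sqrt 3 / 2 * rt g k" "sqrt 3 / 2 * rt g k < pi * k + 2*pi/3 + g"
  using rt_props[OF ia_pos[OF assms]] in_I_iff(2)[of g k "rt g k"] by auto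

lemma theta_less: "sqrt 3 / 2 * x < sqrt 3 / 2 * y \<Longrightarrow> x < y" by simp
lemma theta_pos: "0 < sqrt 3 / 2 * x \<Longrightarrow> 0 < x" by (simp add: zero_less_mult_iff)

definition XC :: "nat \<Rightarrow> real" where "XC m = rt 0 (int m - 1)"
definition XS :: "nat \<Rightarrow> real" where "XS m = (if m = 1 then 0 else rt (-(2*pi/3)) (int m - 1))"
definition XD :: "nat \<Rightarrow> real" where "XD m = (if m = 1 then 0 else rt (2*pi/3) (int m - 2))"

lemma pi_m: "1 \<le> m \<Longrightarrow> pi \<le> pi * real m" "2 \<le> m \<Longrightarrow> 2 * pi \<le> pi * real m"
  "m < n \<Longrightarrow> pi * real m + pi \<le> pi * real n"
proof -
  show "1 \<le> m \<Longrightarrow> pi \<le> pi * real m" using mult_left_mono[of 1 "real m" pi] by simp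
  show "2 \<le> m \<Longrightarrow> 2 * pi \<le> pi * real m" using mult_left_mono[of 2 "real m" pi] by simp
  show "m < n \<Longrightarrow> pi * real m + pi \<le> pi * real n"
    using mult_left_mono[of "real m + 1" "real n" pi] by (simp add: algebra_simps)
qed

lemma XC_b:
  assumes "1 \<le> m"
  shows "pi * real m - 2*pi/3 < sqrt 3 / 2 * XC m" "sqrt 3 / 2 * XC m < pi * real m - pi/3"
proof -
  have k: "real_of_int (int m - 1) = real m - 1" using assms by simp
  have "0 < pi * real_of_int (int m - 1) + pi/3 + 0" unfolding k using pi_m(1)[OF assms] pi_gt_zero
    by (simp add: algebra_simps)
  from rt_theta[OF this] show "pi * real m - 2*pi/3 < sqrt 3 / 2 * XC m" "sqrt 3 / 2 * XC m < pi * real m - pi/3"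
    unfolding XC_def k by (simp_all add: algebra_simps)
qed

lemma XS_b:
  assumes "2 \<le> m"
  shows "pi * real m - 4*pi/3 < sqrt 3 / 2 * XS m" "sqrt 3 / 2 * XS m < pi * real m - pi"
proof -
  have k: "real_of_int (int m - 1) = real m - 1" using assms by simp
  have "0 < pi * real_of_int (int m - 1) + pi/3 + -(2*pi/3)" unfolding k using pi_m(2)[OF assms] pi_gt_zero
    by (simp add: algebra_simps)
  from rt_theta[OF this] assms show "pi * real m - 4*pi/3 < sqrt 3 / 2 * XS m" "sqrt 3 / 2 * XS m < pi * real m - pi"
    unfolding XS_def k by (simp_all add: algebra_simps)
qed

lemma XD_b:
  assumes "2 \<le> m"
  shows "pi * real m - pi < sqrt 3 / 2 * XD m" "sqrt 3 / 2 * XD m < pi * real m - 2*pi/3"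
proof -
  have k: "real_of_int (int m - 2) = real m - 2" using assms by simp
  have "0 < pi * real_of_int (int m - 2) + pi/3 + 2*pi/3" unfolding k using pi_m(2)[OF assms] pi_gt_zero
    by (simp add: algebra_simps)
  from rt_theta[OF this] assms show "pi * real m - pi < sqrt 3 / 2 * XD m" "sqrt 3 / 2 * XD m < pi * real m - 2*pi/3"
    unfolding XD_def k by (simp_all add: algebra_simps)
qed

lemma XC_root: "1 \<le> m \<Longrightarrow> R 0 (XC m) = 0"
  unfolding XC_def by (rule rt_props(3), rule ia_pos) (use pi_m(1)[of m] in \<open>simp add: algebra_simps\<close>)
lemma XS_root: "1 \<le> m \<Longrightarrow> R (-(2*pi/3)) (XS m) = 0"
proof (cases "m = 1")
  case True then show ?thesis by (simp add: XS_def R0_vals)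
next
  case False
  assume "1 \<le> m"
  with False have m: "2 \<le> m" by auto
  have k: "real_of_int (int m - 1) = real m - 1" using m by simp
  have "0 < pi * real_of_int (int m - 1) + pi/3 + -(2*pi/3)" unfolding k using pi_m(2)[OF m] pi_gt_zero
    by (simp add: algebra_simps)
  from rt_props(3)[OF ia_pos[OF this]] show ?thesis using False unfolding XS_def by simp
qed

lemma XD_root: "1 \<le> m \<Longrightarrow> R (2*pi/3) (XD m) = 0"
proof (cases "m = 1")
  case True then show ?thesis by (simp add: XD_def R0_vals)
next
  case False
  assume "1 \<le> m"
  with False have m: "2 \<le> m" by auto
  have k: "real_of_int (int m - 2) = real m - 2" using m by simp
  have "0 < pi * real_of_int (int m - 2) + pi/3 + 2*pi/3" unfolding k using pi_m(2)[OF m] pi_gt_zero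
    by (simp add: algebra_simps)
  from rt_props(3)[OF ia_pos[OF this]] show ?thesis using False unfolding XD_def by simp
qed

lemma XC_img: "XC ` {1..} = {x. 0 < x \<and> R 0 x = 0}"
proof (intro set_eqI iffI)
  fix x assume "x \<in> XC ` {1..}"
  then obtain m where m: "1 \<le> m" "x = XC m" by auto
  have "0 < sqrt 3 / 2 * x" unfolding m(2) using XC_b(1)[OF m(1)] pi_m(1)[OF m(1)] pi_gt_zero by linarith
  then have "0 < x" by (rule theta_pos)
  moreover have "R 0 x = 0" unfolding m(2) by (rule XC_root[OF m(1)])
  ultimately show "x \<in> {x. 0 < x \<and> R 0 x = 0}" by simp
next
  fix x assume "x \<in> {x. 0 < x \<and> R 0 x = 0}"
  then have x: "0 < x" "R 0 x = 0" by auto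
  obtain k where k: "ia 0 k < x" "x < ib 0 k" using root_in_some[OF x] by blast
  have th: "pi * k + pi/3 < sqrt 3 / 2 * x" "sqrt 3 / 2 * x < pi * k + 2*pi/3"
    using k in_I_iff(2)[of 0 k x] by auto
  have tp: "0 < sqrt 3 / 2 * x" using x(1) by simp
  have k0: "0 \<le> k"
  proof (rule ccontr)
    assume "\<not> 0 \<le> k"
    then have "real_of_int k \<le> -1" by simp
    then have "pi * k \<le> pi * (-1)" by (intro mult_left_mono) auto
    then show False using th tp by linarith
  qed
  have pk: "0 < pi * k + pi/3 + 0" using k0 by (simp add: add_nonneg_pos)
  have "rt 0 k = x" by (rule rt_eq[OF ia_pos[OF pk]]) (use k x in auto)
  moreover have "XC (nat k + 1) = rt 0 k" unfolding XC_def using k0 by simp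
  ultimately show "x \<in> XC ` {1..}" by (intro image_eqI[of _ _ "nat k + 1"]) auto
qed

lemma XS_img: "XS ` {1..} = {x. 0 \<le> x \<and> R (-(2*pi/3)) x = 0}"
proof (intro set_eqI iffI)
  fix x assume "x \<in> XS ` {1..}"
  then obtain m where m: "1 \<le> m" "x = XS m" by auto
  have "0 \<le> x"
  proof (cases "m = 1")
    case True then show ?thesis using m by (simp add: XS_def)
  next
    case False
    then have m2: "2 \<le> m" using m by auto
    have "0 < sqrt 3 / 2 * x" unfolding m(2) using XS_b(1)[OF m2] pi_m(2)[OF m2] pi_gt_zero by linarith
    then have "0 < x" by (rule theta_pos)
    then show ?thesis by simp
  qed
  moreover have "R (-(2*pi/3)) x = 0" unfolding m(2) by (rule XS_root[OF m(1)])
  ultimately show "x \<in> {x. 0 \<le> x \<and> R (-(2*pi/3)) x = 0}" by simp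
next
  fix x assume "x \<in> {x. 0 \<le> x \<and> R (-(2*pi/3)) x = 0}"
  then have x: "0 \<le> x" "R (-(2*pi/3)) x = 0" by auto
  show "x \<in> XS ` {1..}"
  proof (cases "x = 0")
    case True then show ?thesis by (intro image_eqI[of _ _ 1]) (auto simp: XS_def)
  next
    case False
    then have x0: "0 < x" using x by simp
    obtain k where k: "ia (-(2*pi/3)) k < x" "x < ib (-(2*pi/3)) k" using root_in_some[OF x0 x(2)] by blast
    have th: "pi * k + pi/3 - 2*pi/3 < sqrt 3 / 2 * x" "sqrt 3 / 2 * x < pi * k + 2*pi/3 - 2*pi/3"
      using k in_I_iff(2)[of "-(2*pi/3)" k x] by auto
    have tp: "0 < sqrt 3 / 2 * x" using x0 by simp
    have k0: "1 \<le> k"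
    proof (rule ccontr)
      assume "\<not> 1 \<le> k"
      then have "real_of_int k \<le> 0" by simp
      then have "pi * k \<le> pi * 0" by (intro mult_left_mono) auto
      then show False using th tp by linarith
    qed
    have "pi * 1 \<le> pi * k" using k0 by (intro mult_left_mono) auto
    then have "pi \<le> pi * k" by (simp only: mult_1_right)
    then have pk: "0 < pi * k + pi/3 + -(2*pi/3)" using pi_gt_zero by linarith
    have "rt (-(2*pi/3)) k = x" by (rule rt_eq[OF ia_pos[OF pk]]) (use k x in auto)
    moreover have "XS (nat k + 1) = rt (-(2*pi/3)) k" unfolding XS_def using k0 by simp
    ultimately show ?thesis by (intro image_eqI[of _ _ "nat k + 1"]) auto
  qed
qed

lemma XD_img: "XD ` {1..} = {x. 0 \<le> x \<and> R (2*pi/3) x = 0}"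
proof (intro set_eqI iffI)
  fix x assume "x \<in> XD ` {1..}"
  then obtain m where m: "1 \<le> m" "x = XD m" by auto
  have "0 \<le> x"
  proof (cases "m = 1")
    case True then show ?thesis using m by (simp add: XD_def)
  next
    case False
    then have m2: "2 \<le> m" using m by auto
    have "0 < sqrt 3 / 2 * x" unfolding m(2) using XD_b(1)[OF m2] pi_m(2)[OF m2] pi_gt_zero by linarith
    then have "0 < x" by (rule theta_pos)
    then show ?thesis by simp
  qed
  moreover have "R (2*pi/3) x = 0" unfolding m(2) by (rule XD_root[OF m(1)])
  ultimately show "x \<in> {x. 0 \<le> x \<and> R (2*pi/3) x = 0}" by simp
next
  fix x assume "x \<in> {x. 0 \<le> x \<and> R (2*pi/3) x = 0}"
  then have x: "0 \<le> x" "R (2*pi/3) x = 0" by auto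
  show "x \<in> XD ` {1..}"
  proof (cases "x = 0")
    case True then show ?thesis by (intro image_eqI[of _ _ 1]) (auto simp: XD_def)
  next
    case False
    then have x0: "0 < x" using x by simp
    obtain k where k: "ia (2*pi/3) k < x" "x < ib (2*pi/3) k" using root_in_some[OF x0 x(2)] by blast
    have th: "pi * k + pi/3 + 2*pi/3 < sqrt 3 / 2 * x" "sqrt 3 / 2 * x < pi * k + 2*pi/3 + 2*pi/3"
      using k in_I_iff(2)[of "2*pi/3" k x] by auto
    have tp: "0 < sqrt 3 / 2 * x" using x0 by simp
    have km: "-1 \<le> k"
    proof (rule ccontr)
      assume "\<not> -1 \<le> k"
      then have "real_of_int k \<le> -2" by simp
      then have "pi * k \<le> pi * (-2)" using pi_gt_zero by (intro mult_left_mono) simp_all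
      then show False using th tp by linarith
    qed
    have k0: "0 \<le> k"
    proof (rule ccontr)
      assume "\<not> 0 \<le> k"
      with km have "k = -1" by simp
      have ia0: "ia (2*pi/3) (-1) = 0" unfolding ia_def by simp
      have "x \<le> ib (2*pi/3) (-1)" using k \<open>k = -1\<close> by simp
      show False
      proof (rule no_two_roots[of 0 x "2*pi/3"])
        show "0 < x" by (rule x0)
        show "R (2*pi/3) 0 = 0" by (rule R0_vals(3))
        show "R (2*pi/3) x = 0" by (rule x(2))
        fix z assume z: "0 < z" "z < x"
        have z1: "ia (2*pi/3) (-1) \<le> z" using ia0 z(1) by simp
        have z2: "z \<le> ib (2*pi/3) (-1)" using z(2) \<open>x \<le> ib (2*pi/3) (-1)\<close> by linarith
        show "R' (2*pi/3) z \<noteq> 0" by (rule R'_ne_I[OF z(1) z1 z2])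
      qed
    qed
    have "0 \<le> pi * k" using k0 by (simp add: zero_le_mult_iff)
    then have pk: "0 < pi * k + pi/3 + 2*pi/3" using pi_gt_zero by linarith
    have "rt (2*pi/3) k = x" by (rule rt_eq[OF ia_pos[OF pk]]) (use k x in auto)
    moreover have "XD (nat k + 2) = rt (2*pi/3) k" unfolding XD_def using k0 by simp
    ultimately show ?thesis by (intro image_eqI[of _ _ "nat k + 2"]) auto
  qed
qed




lemma thl: "sqrt 3 / 2 * x < sqrt 3 / 2 * y \<Longrightarrow> x < y" by simp
lemma thl_iff: "x < y \<longleftrightarrow> sqrt 3 / 2 * x < sqrt 3 / 2 * y" by simp

lemma XC_pos: assumes "1 \<le> m" shows "0 < XC m"
proof -
  have "0 < sqrt 3 / 2 * XC m" using XC_b(1)[OF assms] pi_m(1)[OF assms] pi_gt_zero by linarith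
  then show ?thesis by (simp add: zero_less_mult_iff)
qed
lemma XS_pos: assumes "2 \<le> m" shows "0 < XS m"
proof -
  have "0 < sqrt 3 / 2 * XS m" using XS_b(1)[OF assms] pi_m(2)[OF assms] pi_gt_zero by linarith
  then show ?thesis by (simp add: zero_less_mult_iff)
qed
lemma XD_pos: assumes "2 \<le> m" shows "0 < XD m"
proof -
  have "0 < sqrt 3 / 2 * XD m" using XD_b(1)[OF assms] pi_m(2)[OF assms] pi_gt_zero by linarith
  then show ?thesis by (simp add: zero_less_mult_iff)
qed

lemma XS1: "XS 1 = 0" "XS (Suc 0) = 0" and XD1: "XD 1 = 0" "XD (Suc 0) = 0" by (simp_all add: XS_def XD_def)

lemma mono_XC: "strict_mono_on {1..} XC"
proof (rule strict_mono_onI)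
  fix m n :: nat assume "m \<in> {1..}" "n \<in> {1..}" "m < n"
  then have m: "1 \<le> m" "1 \<le> n" "m < n" by auto
  show "XC m < XC n"
    using XC_b(2)[OF m(1)] XC_b(1)[OF m(2)] pi_m(3)[OF m(3)] pi_gt_zero by (subst thl_iff) linarith
qed

lemma mono_XS: "strict_mono_on {1..} XS"
proof (rule strict_mono_onI)
  fix m n :: nat assume "m \<in> {1..}" "n \<in> {1..}" "m < n"
  then have m: "1 \<le> m" "2 \<le> n" "m < n" by auto
  show "XS m < XS n"
  proof (cases "m = 1")
    case True then show ?thesis using XS_pos[OF m(2)] by (simp add: XS1)
  next
    case False
    then have m2: "2 \<le> m" using m by auto
    show ?thesis
      using XS_b(2)[OF m2] XS_b(1)[OF m(2)] pi_m(3)[OF m(3)] pi_gt_zero by (subst thl_iff) linarith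
  qed
qed

lemma mono_XD: "strict_mono_on {1..} XD"
proof (rule strict_mono_onI)
  fix m n :: nat assume "m \<in> {1..}" "n \<in> {1..}" "m < n"
  then have m: "1 \<le> m" "2 \<le> n" "m < n" by auto
  show "XD m < XD n"
  proof (cases "m = 1")
    case True then show ?thesis using XD_pos[OF m(2)] by (simp add: XD1)
  next
    case False
    then have m2: "2 \<le> m" using m by auto
    show ?thesis
      using XD_b(2)[OF m2] XD_b(1)[OF m(2)] pi_m(3)[OF m(3)] pi_gt_zero by (subst thl_iff) linarith
  qed
qed

lemma pi_Suc: "pi * real (Suc k) = pi * real k + pi" by (simp add: algebra_simps)

lemma interl_c: "1 \<le> k \<Longrightarrow> XS k < XC k \<and> XC k < XS (Suc k)"
proof -
  assume k: "1 \<le> k"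
  have sk: "2 \<le> Suc k" using k by simp
  have "XC k < XS (Suc k)"
    using XC_b(2)[OF k] XS_b(1)[OF sk] pi_Suc[of k] by (subst thl_iff) linarith
  moreover have "XS k < XC k"
  proof (cases "k = 1")
    case True then show ?thesis using XC_pos[OF k] by (simp add: XS1)
  next
    case False
    then have k2: "2 \<le> k" using k by auto
    show ?thesis using XS_b(2)[OF k2] XC_b(1)[OF k] pi_gt_zero by (subst thl_iff) linarith
  qed
  ultimately show ?thesis by simp
qed

lemma interl_d: "1 \<le> k \<Longrightarrow> XS k \<le> XD k \<and> XD k < XS (Suc k)"
proof -
  assume k: "1 \<le> k"
  have sk: "2 \<le> Suc k" using k by simp
  show ?thesis
  proof (cases "k = 1")
    case True then show ?thesis using XS_pos[OF sk] by (simp add: XS1 XD1)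
  next
    case False
    then have k2: "2 \<le> k" using k by auto
    have "XS k < XD k" using XS_b(2)[OF k2] XD_b(1)[OF k2] by (subst thl_iff) linarith
    moreover have "XD k < XS (Suc k)"
      using XD_b(2)[OF k2] XS_b(1)[OF sk] pi_Suc[of k] pi_gt_zero by (subst thl_iff) linarith
    ultimately show ?thesis by simp
  qed
qed

lemma set_conv:
  assumes "{x. 0 \<le> x \<and> P x} = h ` {1..}"
  shows "{- (zeta2 powi j) * complex_of_real x | j x. j \<in> {-1,0,1} \<and> 0 \<le> x \<and> P x}
       = {- (zeta2 powi j) * complex_of_real (h k) | j k. j \<in> {-1,0,1} \<and> (1::nat) \<le> k}"
proof (intro set_eqI iffI)
  fix z assume "z \<in> {- (zeta2 powi j) * complex_of_real x | j x. j \<in> {-1,0,1} \<and> 0 \<le> x \<and> P x}"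
  then obtain j x where jx: "z = - (zeta2 powi j) * complex_of_real x" "j \<in> {-1,0,1}" "0 \<le> x" "P x" by blast
  then have "x \<in> h ` {1..}" using assms by blast
  then obtain k where "1 \<le> k" "x = h k" by auto
  then show "z \<in> {- (zeta2 powi j) * complex_of_real (h k) | j k. j \<in> {-1,0,1} \<and> (1::nat) \<le> k}"
    using jx by blast
next
  fix z assume "z \<in> {- (zeta2 powi j) * complex_of_real (h k) | j k. j \<in> {-1,0,1} \<and> (1::nat) \<le> k}"
  then obtain j k where jk: "z = - (zeta2 powi j) * complex_of_real (h k)" "j \<in> {-1,0,1}" "1 \<le> k" by blast
  then have "h k \<in> {x. 0 \<le> x \<and> P x}" using assms by auto
  then show "z \<in> {- (zeta2 powi j) * complex_of_real x | j x. j \<in> {-1,0,1} \<and> 0 \<le> x \<and> P x}"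
    using jk by blast
qed

theorem lemma1p2:
  shows "\<exists>xc xs xd :: nat \<Rightarrow> real.
    strict_mono_on {1..} xc \<and> strict_mono_on {1..} xs \<and> strict_mono_on {1..} xd \<and>
    0 < xc 1 \<and> xs 1 = 0 \<and> xd 1 = 0 \<and>
    xc ` {1..} = {x. 0 < x \<and> Fc x = 0} \<and>
    xs ` {1..} = {x. 0 \<le> x \<and> Fs x = 0} \<and>
    xd ` {1..} = {x. 0 \<le> x \<and> Fd x = 0} \<and>
    {z. cfun z = 0} = {- (zeta2 powi j) * complex_of_real (xc k) | j k. j \<in> {-1, 0, 1} \<and> 1 \<le> k} \<and>
    {z. sfun z = 0} = {- (zeta2 powi j) * complex_of_real (xs k) | j k. j \<in> {-1, 0, 1} \<and> 1 \<le> k} \<and>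
    {z. dfun z = 0} = {- (zeta2 powi j) * complex_of_real (xd k) | j k. j \<in> {-1, 0, 1} \<and> 1 \<le> k} \<and>
    (\<forall>x. 0 < x \<and> Fc x = 0 \<longrightarrow> deriv Fc x \<noteq> 0) \<and>
    (\<forall>x. 0 \<le> x \<and> Fs x = 0 \<longrightarrow> deriv Fs x \<noteq> 0) \<and>
    (\<forall>x. 0 < x \<and> Fd x = 0 \<longrightarrow> deriv Fd x \<noteq> 0) \<and>
    (\<forall>k\<ge>1. xs k < xc k \<and> xc k < xs (Suc k)) \<and>
    (\<forall>k\<ge>1. xs k \<le> xd k \<and> xd k < xs (Suc k))"
proof -
  have c0: "{x. 0 \<le> x \<and> R 0 x = 0} = {x. 0 < x \<and> R 0 x = 0}"
    using R0_vals(1) by (auto simp: le_less)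
  have imc: "XC ` {1..} = {x. 0 < x \<and> Fc x = 0}" unfolding Fc_R by (rule XC_img)
  have ims: "XS ` {1..} = {x. 0 \<le> x \<and> Fs x = 0}" unfolding Fs_R using XS_img by simp
  have imd: "XD ` {1..} = {x. 0 \<le> x \<and> Fd x = 0}" unfolding Fd_R by (rule XD_img)
  have zc: "{z. cfun z = 0} = {- (zeta2 powi j) * complex_of_real (XC k) | j k. j \<in> {-1, 0, 1} \<and> 1 \<le> k}"
  proof -
    have "{z. cfun z = 0} = {- (zeta2 powi j) * complex_of_real x | j x. j \<in> {-1,0,1} \<and> 0 \<le> x \<and> R 0 x = 0}"
      by (rule zero_set[of cfun 0 1 1, OF cfun_H]) (simp_all add: cfun_rot)
    also have "\<dots> = {- (zeta2 powi j) * complex_of_real (XC k) | j k. j \<in> {-1, 0, 1} \<and> 1 \<le> k}"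
      by (rule set_conv) (simp only: c0 XC_img)
    finally show ?thesis .
  qed
  have zs: "{z. sfun z = 0} = {- (zeta2 powi j) * complex_of_real (XS k) | j k. j \<in> {-1, 0, 1} \<and> 1 \<le> k}"
  proof -
    have "{z. sfun z = 0} = {- (zeta2 powi j) * complex_of_real x | j x. j \<in> {-1,0,1} \<and> 0 \<le> x \<and> R (-(2*pi/3)) x = 0}"
      by (rule zero_set[of sfun "-(2*pi/3)" zeta2 zeta3, OF sfun_H sfun_rot zne])
    also have "\<dots> = {- (zeta2 powi j) * complex_of_real (XS k) | j k. j \<in> {-1, 0, 1} \<and> 1 \<le> k}"
      by (rule set_conv) (simp only: XS_img)
    finally show ?thesis .
  qed
  have zd: "{z. dfun z = 0} = {- (zeta2 powi j) * complex_of_real (XD k) | j k. j \<in> {-1, 0, 1} \<and> 1 \<le> k}"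
  proof -
    have "{z. dfun z = 0} = {- (zeta2 powi j) * complex_of_real x | j x. j \<in> {-1,0,1} \<and> 0 \<le> x \<and> R (2*pi/3) x = 0}"
      by (rule zero_set[of dfun "2*pi/3" zeta3 zeta2, OF dfun_H dfun_rot zne(2,1)])
    also have "\<dots> = {- (zeta2 powi j) * complex_of_real (XD k) | j k. j \<in> {-1, 0, 1} \<and> 1 \<le> k}"
      by (rule set_conv) (simp only: XD_img)
    finally show ?thesis .
  qed
  have dc: "\<forall>x. 0 < x \<and> Fc x = 0 \<longrightarrow> deriv Fc x \<noteq> 0"
    unfolding Fc_R deriv_R using R_root_simple by blast
  have ds: "\<forall>x. 0 \<le> x \<and> Fs x = 0 \<longrightarrow> deriv Fs x \<noteq> 0"
  proof (intro allI impI)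
    fix x assume x: "0 \<le> x \<and> Fs x = 0"
    then have r: "R (-(2*pi/3)) x = 0" unfolding Fs_R by simp
    have "R' (-(2*pi/3)) x \<noteq> 0"
    proof (cases "x = 0")
      case True then show ?thesis using R'_s0 by simp
    next
      case False then show ?thesis using x r R_root_simple by simp
    qed
    then show "deriv Fs x \<noteq> 0" unfolding Fs_R deriv_mR by simp
  qed
  have dd: "\<forall>x. 0 < x \<and> Fd x = 0 \<longrightarrow> deriv Fd x \<noteq> 0"
    unfolding Fd_R deriv_R using R_root_simple by blast
  have p1: "0 < XC 1" by (rule XC_pos) simp
  have ic: "\<forall>k\<ge>1. XS k < XC k \<and> XC k < XS (Suc k)" using interl_c by blast
  have id: "\<forall>k\<ge>1. XS k \<le> XD k \<and> XD k < XS (Suc k)" using interl_d by blast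
  show ?thesis
    apply (rule exI[of _ XC], rule exI[of _ XS], rule exI[of _ XD])
    apply (intro conjI)
    by (fact mono_XC mono_XS mono_XD p1 XS1(1) XD1(1) imc ims imd zc zs zd dc ds dd ic id)+
qed


end
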